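(* Let $G$ be a graph that contains no induced $C_5$, no induced bull, and no induced anchor. Then $G$ is pure. Moreover, every shortest odd hole in $G$ is clean.
   Context: All graphs are finite and simple. The bull is the graph consisting of a triangle with two disjoint pendant edges. An anchor is a six-vertex graph consisting of a 4-vertex induced path $P$, a vertex $c$ adjacent to all vertices of $P$, and a vertex $a$ adjacent to no vertex of $P$ (with $a,c$ either adjacent or not). A hole is an induced subgraph isomorphic to a cycle $C_k$ with $k\ge4$; it is odd if $k$ is odd. A shortest odd hole of $G$ is an odd hole of minimum length. A hole $C$ in $G$ is clean if for every $v\in V(G)\setminus V(C)$, the set of neighbours of $v$ in $V(C)$ is contained in the vertex set of some two-edge path of $C$. $G$ is pure if either $G$ contains no odd hole, or $G$ contains a shortest odd hole that is clean. *)

theory Defs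
  imports Main
begin

definition graph :: "'a set \<Rightarrow> ('a \<Rightarrow> 'a \<Rightarrow> bool) \<Rightarrow> bool" where
  "graph V E \<longleftrightarrow> finite V \<and> (\<forall>x y. E x y \<longrightarrow> E y x) \<and> (\<forall>x. \<not> E x x)
      \<and> (\<forall>x y. E x y \<longrightarrow> x \<in> V \<and> y \<in> V)"

definition contains_induced ::
  "'a set \<Rightarrow> ('a \<Rightarrow> 'a \<Rightarrow> bool) \<Rightarrow> 'b set \<Rightarrow> ('b \<Rightarrow> 'b \<Rightarrow> bool) \<Rightarrow> bool" where
  "contains_induced V E HV HE \<longleftrightarrow>
     (\<exists>f. inj_on f HV \<and> f ` HV \<subseteq> V \<and> (\<forall>x\<in>HV. \<forall>y\<in>HV. HE x y \<longleftrightarrow> E (f x) (f y)))"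

definition sym_edges :: "(nat \<times> nat) set \<Rightarrow> nat \<Rightarrow> nat \<Rightarrow> bool" where
  "sym_edges S x y \<longleftrightarrow> (x, y) \<in> S \<or> (y, x) \<in> S"

definition C5_V :: "nat set" where "C5_V = {0..<5}"
definition C5_E :: "nat \<Rightarrow> nat \<Rightarrow> bool" where
  "C5_E = sym_edges {(0,1),(1,2),(2,3),(3,4),(4,0)}"

definition bull_V :: "nat set" where "bull_V = {0..<5}"
definition bull_E :: "nat \<Rightarrow> nat \<Rightarrow> bool" where
  "bull_E = sym_edges {(0,1),(1,2),(2,0),(3,0),(4,1)}"

text \<open>Anchors: induced path 0-1-2-3, vertex c = 4 complete to the path,
vertex a = 5 anticomplete to the path; a,c adjacent iff the flag ac holds.\<close>
definition anchor_V :: "nat set" where "anchor_V = {0..<6}"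
definition anchor_E :: "bool \<Rightarrow> nat \<Rightarrow> nat \<Rightarrow> bool" where
  "anchor_E ac = sym_edges ({(0,1),(1,2),(2,3),(4,0),(4,1),(4,2),(4,3)} \<union> (if ac then {(5,4)} else {}))"

definition is_hole :: "'a set \<Rightarrow> ('a \<Rightarrow> 'a \<Rightarrow> bool) \<Rightarrow> 'a list \<Rightarrow> bool" where
  "is_hole V E cs \<longleftrightarrow> distinct cs \<and> length cs \<ge> 4 \<and> set cs \<subseteq> V \<and>
     (\<forall>i < length cs. \<forall>j < length cs.
        E (cs ! i) (cs ! j) \<longleftrightarrow> (j = Suc i mod length cs \<or> i = Suc j mod length cs))"

definition is_odd_hole :: "'a set \<Rightarrow> ('a \<Rightarrow> 'a \<Rightarrow> bool) \<Rightarrow> 'a list \<Rightarrow> bool" where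
  "is_odd_hole V E cs \<longleftrightarrow> is_hole V E cs \<and> odd (length cs)"

definition shortest_odd_hole :: "'a set \<Rightarrow> ('a \<Rightarrow> 'a \<Rightarrow> bool) \<Rightarrow> 'a list \<Rightarrow> bool" where
  "shortest_odd_hole V E cs \<longleftrightarrow> is_odd_hole V E cs \<and>
     (\<forall>ds. is_odd_hole V E ds \<longrightarrow> length cs \<le> length ds)"

definition clean :: "'a set \<Rightarrow> ('a \<Rightarrow> 'a \<Rightarrow> bool) \<Rightarrow> 'a list \<Rightarrow> bool" where
  "clean V E cs \<longleftrightarrow> (\<forall>v \<in> V - set cs. \<exists>i < length cs.
     {u \<in> set cs. E v u} \<subseteq>
       {cs ! i, cs ! (Suc i mod length cs), cs ! (Suc (Suc i) mod length cs)})"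

definition pure :: "'a set \<Rightarrow> ('a \<Rightarrow> 'a \<Rightarrow> bool) \<Rightarrow> bool" where
  "pure V E \<longleftrightarrow> (\<not> (\<exists>cs. is_odd_hole V E cs)) \<or>
     (\<exists>cs. shortest_odd_hole V E cs \<and> clean V E cs)"

end

theory Submission imports Defs begin

lemma comb:
  fixes t :: "int \<Rightarrow> bool" and k :: int
  assumes per: "\<And>x. t x = t (x mod k)"
    and kodd: "odd k" and k7: "k \<ge> 7"
    and A: "\<And>i. \<not> (t i \<and> t (i+1) \<and> t (i+2) \<and> t (i+3))"
    and B: "\<And>i. \<not> (\<not> t i \<and> t (i+1) \<and> t (i+2) \<and> \<not> t (i+3))"
    and C: "\<And>q l. t q \<Longrightarrow> t (q+l+1) \<Longrightarrow> (\<forall>j. 1 \<le> j \<and> j \<le> l \<longrightarrow> \<not> t (q+j))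
              \<Longrightarrow> even l \<Longrightarrow> 2 \<le> l \<Longrightarrow> l \<le> k - 4 \<Longrightarrow> False"
    and t0: "t 0" and tm: "\<not> t (-1)"
  shows "\<exists>i. \<forall>j. t j \<longrightarrow> j mod k \<in> {i mod k, (i+1) mod k, (i+2) mod k}"
proof (rule ccontr)
  assume ncon: "\<not> ?thesis"
  have key: "int n \<le> k \<Longrightarrow> t (int n) \<Longrightarrow> \<not> t (int n - 1) \<Longrightarrow> even (int n)" for n :: nat
  proof (induction n rule: less_induct)
    case (less n)
    show ?case
    proof (cases "n = 0")
      case True thus ?thesis by simp
    next
      case False
      define Q where "Q = {j::int. 0 \<le> j \<and> j < int n \<and> t j}"
      have fQ: "finite Q" unfolding Q_def by (rule finite_subset[of _ "{0..<int n}"]) auto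
      have Q0: "0 \<in> Q" using t0 False unfolding Q_def by auto
      define q where "q = Max Q"
      have qQ: "q \<in> Q" using fQ Q0 unfolding q_def by (intro Max_in) auto
      have qmax: "\<And>j. j \<in> Q \<Longrightarrow> j \<le> q" using fQ unfolding q_def by auto
      have tq: "t q" and q0: "0 \<le> q" and qn: "q < int n" using qQ Q_def by auto
      have zeros: "\<And>j. q < j \<Longrightarrow> j < int n \<Longrightarrow> \<not> t j"
      proof
        fix j assume "q < j" "j < int n" "t j"
        hence "j \<in> Q" using q0 unfolding Q_def by auto
        thus False using qmax \<open>q < j\<close> by force
      qed
      have qn2: "q \<le> int n - 2" using less.prems(3) tq qn by (cases "q = int n - 1") auto
      define L where "L = int n - q"
      show ?thesis
      proof (cases "even L")
        case False
        show ?thesis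
        proof (cases "L \<le> k - 3")
          case True
          have e1: "q + (L - 1) + 1 = int n" unfolding L_def by simp
          have "False"
          proof (rule C[of q "L - 1"])
            show "t q" by fact
            show "t (q + (L - 1) + 1)" using e1 less.prems by simp
            show "\<forall>j. 1 \<le> j \<and> j \<le> L - 1 \<longrightarrow> \<not> t (q + j)"
              using zeros unfolding L_def by auto
            show "even (L - 1)" using False by simp
            show "2 \<le> L - 1" using False qn2 unfolding L_def by presburger
            show "L - 1 \<le> k - 4" using True False kodd by presburger
          qed
          thus ?thesis ..
        next
          case False
          have "\<forall>j. t j \<longrightarrow> j mod k \<in> {int n mod k, (int n + 1) mod k, (int n + 2) mod k}"
          proof (intro allI impI)
            fix j assume "t j"
            define r where "r = j mod k"
            have r: "0 \<le> r" "r < k" using k7 unfolding r_def by auto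
            have tr: "t r" using per \<open>t j\<close> unfolding r_def by simp
            have rr: "r \<le> q \<or> int n \<le> r" using zeros[of r] tr by linarith
            have "\<exists>d\<in>{0,1,2}. (int n + d) mod k = r"
            proof (cases "r \<le> q")
              case True
              have "r + k = int n \<or> r + k = int n + 1 \<or> r + k = int n + 2"
                using True \<open>\<not> L \<le> k - 3\<close> less.prems(1) r unfolding L_def by linarith
              moreover have "(r + k) mod k = r" using r by simp
              ultimately have "(int n) mod k = r \<or> (int n + 1) mod k = r \<or> (int n + 2) mod k = r" by metis
              thus ?thesis by auto
            next
              case False
              hence "r = int n \<or> r = int n + 1 \<or> r = int n + 2"
                using rr \<open>\<not> L \<le> k - 3\<close> q0 r unfolding L_def by linarith
              moreover have "r mod k = r" using r by simp
              ultimately show ?thesis by auto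
            qed
            thus "j mod k \<in> {int n mod k, (int n + 1) mod k, (int n + 2) mod k}"
              unfolding r_def by auto
          qed
          thus ?thesis using ncon by blast
        qed
      next
        case True
        have tq1: "\<not> t (q + 1)" using zeros[of "q+1"] qn2 by simp
        show ?thesis
        proof (cases "t (q - 1)")
          case False
          have "even (int (nat q))"
          proof (rule less.IH)
            show "nat q < n" using qn q0 by linarith
            show "int (nat q) \<le> k" using qn q0 less.prems(1) by linarith
            show "t (int (nat q))" using tq q0 by simp
            show "\<not> t (int (nat q) - 1)" using False q0 by simp
          qed
          hence "even q" using q0 by simp
          thus ?thesis using True unfolding L_def by presburger
        next
          case True
          have Bq: "\<not> (\<not> t (q-2) \<and> t (q-1) \<and> t q \<and> \<not> t (q+1))"
            using B[of "q-2"] by (simp add: algebra_simps)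
          have tq2: "t (q - 2)" using Bq True tq tq1 by blast
          have Aq: "\<not> (t (q-3) \<and> t (q-2) \<and> t (q-1) \<and> t q)"
            using A[of "q-3"] by (simp add: algebra_simps)
          have tq3: "\<not> t (q - 3)" using Aq tq2 True tq by blast
          have q2: "q \<ge> 2"
          proof (rule ccontr)
            assume "\<not> q \<ge> 2"
            hence "q = 0 \<or> q = 1" using q0 by linarith
            thus False using tm True tq2 by auto
          qed
          have "even (int (nat (q - 2)))"
          proof (rule less.IH)
            show "nat (q - 2) < n" using qn q2 by linarith
            show "int (nat (q - 2)) \<le> k" using qn q2 less.prems(1) by linarith
            show "t (int (nat (q - 2)))" using tq2 q2 by simp
            show "\<not> t (int (nat (q - 2)) - 1)" using tq3 q2 by (simp add: algebra_simps)
          qed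
          hence "even q" using q2 by simp
          thus ?thesis using \<open>even L\<close> unfolding L_def by presburger
        qed
      qed
    qed
  qed
  have tk: "t k" using per[of k] t0 by simp
  have m1: "(-1) mod k = k - 1" using k7 by (simp add: zmod_minus1)
  have "t (k - 1) = t ((k - 1) mod k)" by (rule per)
  also have "(k - 1) mod k = (-1) mod k" using m1 k7 by simp
  also have "t ((-1) mod k) = t (-1)" by (rule per[symmetric])
  finally have tk1: "\<not> t (k - 1)" using tm by simp
  have "even (int (nat k))" using key[of "nat k"] tk tk1 k7 by simp
  thus False using kodd k7 by simp
qed

locale SOH =
  fixes V :: "'a set" and E :: "'a \<Rightarrow> 'a \<Rightarrow> bool" and cs :: "'a list"
  assumes g: "graph V E" and hole: "is_hole V E cs"
begin

definition K :: int where "K = int (length cs)"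
definition c :: "int \<Rightarrow> 'a" where "c x = cs ! nat (x mod K)"

lemma K4: "K \<ge> 4" using hole unfolding is_hole_def K_def by auto

lemma idx: "nat (x mod K) < length cs"
proof -
  have "x mod K < K" "0 \<le> x mod K" using K4 by auto
  thus ?thesis unfolding K_def by (simp add: nat_less_iff)
qed

lemma c_in: "c x \<in> set cs" unfolding c_def using idx by auto
lemma c_V: "c x \<in> V" using c_in hole unfolding is_hole_def by auto

lemma c_mod: "c (x mod K) = c x" unfolding c_def by simp

lemma c_eq: "c x = c y \<longleftrightarrow> x mod K = y mod K"
proof -
  have d: "distinct cs" using hole unfolding is_hole_def by auto
  have "c x = c y \<longleftrightarrow> nat (x mod K) = nat (y mod K)"
    unfolding c_def using idx[of x] idx[of y] nth_eq_iff_index_eq[OF d] by blast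
  also have "\<dots> \<longleftrightarrow> x mod K = y mod K" 
  proof (rule eq_nat_nat_iff)
    show "0 \<le> x mod K" "0 \<le> y mod K" using K4 by auto
  qed
  finally show ?thesis .
qed

lemma c_inj: "c x = c y \<Longrightarrow> \<bar>x - y\<bar> < K \<Longrightarrow> x = y"
proof -
  assume "c x = c y" "\<bar>x - y\<bar> < K"
  hence "K dvd x - y" using c_eq mod_eq_dvd_iff by blast
  then obtain m where m: "x - y = K * m" by (auto elim: dvdE)
  show "x = y"
  proof (cases "m = 0")
    case False
    hence "\<bar>m\<bar> \<ge> 1" by simp
    hence "\<bar>K * m\<bar> \<ge> K" using K4 by (simp add: abs_mult)
    thus ?thesis using m \<open>\<bar>x - y\<bar> < K\<close> by simp
  qed (use m in simp)
qed

lemma nat_mod_int: "int (Suc (nat (x mod K)) mod length cs) = (x + 1) mod K"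
proof -
  have "int (Suc (nat (x mod K)) mod length cs) = (int (nat (x mod K)) + 1) mod K"
    unfolding K_def by (simp add: of_nat_mod add.commute)
  also have "(int (nat (x mod K)) + 1) mod K = (x mod K + 1) mod K" using K4 by simp
  also have "\<dots> = (x+1) mod K" by (simp add: mod_add_left_eq)
  finally show ?thesis .
qed

lemma c_adj_mod: "E (c x) (c y) \<longleftrightarrow> (y - x) mod K = 1 \<or> (x - y) mod K = 1"
proof -
  let ?i = "nat (x mod K)" and ?j = "nat (y mod K)"
  have h: "E (cs ! ?i) (cs ! ?j) \<longleftrightarrow> (?j = Suc ?i mod length cs \<or> ?i = Suc ?j mod length cs)"
    using hole idx[of x] idx[of y] unfolding is_hole_def by blast
  have K1: "K > 1" using K4 by simp
  have e1: "(?j = Suc ?i mod length cs) \<longleftrightarrow> (y - x) mod K = 1"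
  proof -
    have "(?j = Suc ?i mod length cs) \<longleftrightarrow> int ?j = int (Suc ?i mod length cs)" by linarith
    also have "\<dots> \<longleftrightarrow> y mod K = (x + 1) mod K" using nat_mod_int K4 by simp
    also have "\<dots> \<longleftrightarrow> K dvd y - (x + 1)" by (simp add: mod_eq_dvd_iff)
    also have "\<dots> \<longleftrightarrow> (y - x) mod K = 1 mod K" by (simp add: mod_eq_dvd_iff algebra_simps)
    also have "\<dots> \<longleftrightarrow> (y - x) mod K = 1" using K1 by simp
    finally show ?thesis .
  qed
  have e2: "(?i = Suc ?j mod length cs) \<longleftrightarrow> (x - y) mod K = 1"
  proof -
    have "(?i = Suc ?j mod length cs) \<longleftrightarrow> int ?i = int (Suc ?j mod length cs)" by linarith
    also have "\<dots> \<longleftrightarrow> x mod K = (y + 1) mod K" using nat_mod_int K4 by simp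
    also have "\<dots> \<longleftrightarrow> K dvd x - (y + 1)" by (simp add: mod_eq_dvd_iff)
    also have "\<dots> \<longleftrightarrow> (x - y) mod K = 1 mod K" by (simp add: mod_eq_dvd_iff algebra_simps)
    also have "\<dots> \<longleftrightarrow> (x - y) mod K = 1" using K1 by simp
    finally show ?thesis .
  qed
  show ?thesis using h e1 e2 unfolding c_def by simp
qed

lemma mod1_small: "\<bar>d\<bar> \<le> K - 2 \<Longrightarrow> (d mod K = 1) \<longleftrightarrow> d = 1"
proof
  assume a: "\<bar>d\<bar> \<le> K - 2" "d mod K = 1"
  show "d = 1"
  proof (cases "d \<ge> 0")
    case True thus ?thesis using a by (simp add: mod_pos_pos_trivial)
  next
    case False
    have "d mod K = (d + K) mod K" by simp
    also have "\<dots> = d + K" using a K4 False by (intro mod_pos_pos_trivial) auto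
    finally have "d mod K = d + K" .
    thus ?thesis using a False by simp
  qed
next
  assume "d = 1" thus "d mod K = 1" using K4 by simp
qed

lemma c_adj: "\<bar>y - x\<bar> \<le> K - 2 \<Longrightarrow> E (c x) (c y) \<longleftrightarrow> (y = x + 1 \<or> x = y + 1)"
  using c_adj_mod mod1_small[of "y - x"] mod1_small[of "x - y"] by auto


lemma Esym: "E x y \<longleftrightarrow> E y x" using g unfolding graph_def by blast
lemma Eirr: "\<not> E x x" using g unfolding graph_def by blast

lemma v_ne_c: "v \<notin> set cs \<Longrightarrow> v \<noteq> c x" using c_in by metis

lemma anchor_found:
  assumes K7: "K \<ge> 7" and v: "v \<in> V" "v \<notin> set cs"
    and s: "E v (c i)" "E v (c (i+1))" "E v (c (i+2))" "E v (c (i+3))"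
  shows "contains_induced V E anchor_V (anchor_E (E v (c (i+5))))"
proof -
  define f where "f x = (if x = 4 then v else c (i + int x))" for x :: nat
  have U: "anchor_V = {0,1,2,3,4,5}" unfolding anchor_V_def by auto
  have cv: "\<And>x. E (c x) v = E v (c x)" using Esym by blast
  have inj: "inj_on f anchor_V"
  proof (rule inj_onI)
    fix x y assume xy: "x \<in> anchor_V" "y \<in> anchor_V" "f x = f y"
    show "x = y"
    proof (cases "x = 4 \<or> y = 4")
      case True thus ?thesis using xy v_ne_c[OF v(2)] unfolding f_def by (auto split: if_splits)
    next
      case False
      hence "c (i + int x) = c (i + int y)" using xy unfolding f_def by simp
      moreover have "\<bar>(i + int x) - (i + int y)\<bar> < K" using xy K7 unfolding anchor_V_def by auto
      ultimately show ?thesis using c_inj by fastforce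
    qed
  qed
  have img: "f ` anchor_V \<subseteq> V" using v c_V unfolding f_def by auto
  have adj: "\<forall>x\<in>anchor_V. \<forall>y\<in>anchor_V. anchor_E (E v (c (i+5))) x y \<longleftrightarrow> E (f x) (f y)"
    unfolding U using s K7
    by (simp add: f_def anchor_E_def sym_edges_def cv c_adj Eirr)
  show ?thesis unfolding contains_induced_def using inj img adj by blast
qed


lemma bull_found:
  assumes K7: "K \<ge> 7" and v: "v \<in> V" "v \<notin> set cs"
    and s: "\<not> E v (c i)" "E v (c (i+1))" "E v (c (i+2))" "\<not> E v (c (i+3))"
  shows "contains_induced V E bull_V bull_E"
proof -
  define f where "f x = (if x = 2 then v else if x = 0 then c (i+1) else if x = 1 then c (i+2)
     else if x = 3 then c i else c (i+3))" for x :: nat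
  have U: "bull_V = {0,1,2,3,4}" unfolding bull_V_def by auto
  have cv: "\<And>x. E (c x) v = E v (c x)" using Esym by blast
  have vc: "\<And>x. v \<noteq> c x" "\<And>x. c x \<noteq> v" using v_ne_c[OF v(2)] by auto
  have ce: "\<And>a b. \<bar>a - b\<bar> < K \<Longrightarrow> c (i + a) = c (i + b) \<longleftrightarrow> a = b"
    using c_inj by fastforce
  have ce0: "\<And>b. \<bar>b\<bar> < K \<Longrightarrow> c i = c (i + b) \<longleftrightarrow> b = 0" "\<And>b. \<bar>b\<bar> < K \<Longrightarrow> c (i + b) = c i \<longleftrightarrow> b = 0"
    using ce[of 0] ce[of _ 0] by auto
  have inj: "inj_on f bull_V"
    unfolding U inj_on_def using K7 by (simp add: f_def vc ce ce0)
  have img: "f ` bull_V \<subseteq> V" using v c_V unfolding f_def by auto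
  have adj: "\<forall>x\<in>bull_V. \<forall>y\<in>bull_V. bull_E x y \<longleftrightarrow> E (f x) (f y)"
    unfolding U using s K7
    by (simp add: f_def bull_E_def sym_edges_def cv c_adj Eirr)
  show ?thesis unfolding contains_induced_def using inj img adj by blast
qed

lemma C5_found:
  assumes "K = 5"
  shows "contains_induced V E C5_V C5_E"
proof -
  have L: "length cs = 5" using assms unfolding K_def by simp
  have U: "C5_V = {0,1,2,3,4}" unfolding C5_V_def by auto
  have d: "distinct cs" using hole unfolding is_hole_def by auto
  have inj: "inj_on (\<lambda>x. cs ! x) C5_V"
    unfolding C5_V_def inj_on_def using d L by (simp add: nth_eq_iff_index_eq)
  have img: "(\<lambda>x. cs ! x) ` C5_V \<subseteq> V" using hole L unfolding is_hole_def C5_V_def by auto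
  have hh: "\<forall>x<5. \<forall>y<5. E (cs ! x) (cs ! y) \<longleftrightarrow> (y = Suc x mod 5 \<or> x = Suc y mod 5)"
    using hole L unfolding is_hole_def by simp
  have ce: "\<forall>x\<in>C5_V. \<forall>y\<in>C5_V. C5_E x y \<longleftrightarrow> (y = Suc x mod 5 \<or> x = Suc y mod 5)"
    unfolding U by (simp add: C5_E_def sym_edges_def)
  have adj: "\<forall>x\<in>C5_V. \<forall>y\<in>C5_V. C5_E x y \<longleftrightarrow> E (cs ! x) (cs ! y)"
    using ce hh unfolding C5_V_def by auto
  show ?thesis unfolding contains_induced_def using inj img adj by blast
qed


lemma hole_found:
  assumes v: "v \<in> V" "v \<notin> set cs"
    and s1: "E v (c q)" and s2: "E v (c (q + l + 1))"
    and s3: "\<forall>j. 1 \<le> j \<and> j \<le> l \<longrightarrow> \<not> E v (c (q + j))"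
    and l2: "2 \<le> l" and lK: "l \<le> K - 4"
  shows "is_hole V E (v # map (\<lambda>j. c (q + int j)) [0..<nat l + 2])"
proof -
  define n where "n = nat l"
  have nl: "int n = l" using l2 unfolding n_def by simp
  define ds where "ds = v # map (\<lambda>j. c (q + int j)) [0..<n + 2]"
  have len: "length ds = n + 3" unfolding ds_def by simp
  have vc: "\<And>x. v \<noteq> c x" using v_ne_c[OF v(2)] by auto
  have dmap: "distinct (map (\<lambda>j. c (q + int j)) [0..<n + 2])"
  proof (subst distinct_map, rule conjI)
    show "inj_on (\<lambda>j. c (q + int j)) (set [0..<n + 2])"
    proof (rule inj_onI)
      fix a b assume ab: "a \<in> set [0..<n + 2]" "b \<in> set [0..<n + 2]" "c (q + int a) = c (q + int b)"
      have "\<bar>(q + int a) - (q + int b)\<bar> < K" using ab(1,2) nl lK by auto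
      thus "a = b" using c_inj[OF ab(3)] by simp
    qed
  qed simp
  have dist: "distinct ds" unfolding ds_def using dmap vc by auto
  have sub: "set ds \<subseteq> V" unfolding ds_def using v c_V by auto
  have nth0: "ds ! 0 = v" unfolding ds_def by simp
  have nthS: "\<And>a. a < n + 2 \<Longrightarrow> ds ! Suc a = c (q + int a)" unfolding ds_def by (simp del: upt_Suc)
  have cv: "\<And>x. E (c x) v = E v (c x)" using Esym by blast
  have vcq: "\<And>b. b < n + 2 \<Longrightarrow> E v (c (q + int b)) \<longleftrightarrow> (b = 0 \<or> b = n + 1)"
  proof -
    fix b assume b: "b < n + 2"
    show "E v (c (q + int b)) \<longleftrightarrow> (b = 0 \<or> b = n + 1)"
    proof (cases "b = 0 \<or> b = n + 1")
      case True thus ?thesis using s1 s2 nl by (auto simp: ac_simps)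
    next
      case False
      hence "1 \<le> int b" "int b \<le> l" using b nl by auto
      thus ?thesis using s3 False by auto
    qed
  qed
  have adj: "\<forall>a < n + 3. \<forall>b < n + 3. E (ds ! a) (ds ! b) \<longleftrightarrow> (b = Suc a mod (n + 3) \<or> a = Suc b mod (n + 3))"
  proof (intro allI impI)
    fix a b assume a: "a < n + 3" and b: "b < n + 3"
    show "E (ds ! a) (ds ! b) \<longleftrightarrow> (b = Suc a mod (n + 3) \<or> a = Suc b mod (n + 3))"
    proof (cases a)
      case 0
      show ?thesis
      proof (cases b)
        case 0 thus ?thesis using \<open>a = 0\<close> nth0 Eirr by simp
      next
        case (Suc b')
        have "E (ds ! a) (ds ! b) \<longleftrightarrow> (b' = 0 \<or> b' = n + 1)"
          using \<open>a = 0\<close> Suc nth0 nthS[of b'] vcq[of b'] b by simp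
        also have "\<dots> \<longleftrightarrow> (b = Suc a mod (n + 3) \<or> a = Suc b mod (n + 3))"
          using \<open>a = 0\<close> Suc b by (auto simp: mod_Suc)
        finally show ?thesis .
      qed
    next
      case (Suc a')
      show ?thesis
      proof (cases b)
        case 0
        have "E (ds ! a) (ds ! b) \<longleftrightarrow> (a' = 0 \<or> a' = n + 1)"
          using \<open>b = 0\<close> Suc nth0 nthS[of a'] vcq[of a'] a cv by simp
        also have "\<dots> \<longleftrightarrow> (b = Suc a mod (n + 3) \<or> a = Suc b mod (n + 3))"
          using \<open>b = 0\<close> Suc a by (auto simp: mod_Suc)
        finally show ?thesis .
      next
        case (Suc b')
        have "E (ds ! a) (ds ! b) \<longleftrightarrow> E (c (q + int a')) (c (q + int b'))"
          using \<open>a = Suc a'\<close> Suc nthS a b by simp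
        also have "\<dots> \<longleftrightarrow> (q + int b' = q + int a' + 1 \<or> q + int a' = q + int b' + 1)"
          using a b \<open>a = Suc a'\<close> Suc nl lK by (intro c_adj) auto
        also have "\<dots> \<longleftrightarrow> (b' = a' + 1 \<or> a' = b' + 1)" by auto
        also have "\<dots> \<longleftrightarrow> (b = Suc a mod (n + 3) \<or> a = Suc b mod (n + 3))"
          using \<open>a = Suc a'\<close> Suc a b by (auto simp: mod_Suc)
        finally show ?thesis .
      qed
    qed
  qed
  have "is_hole V E ds" unfolding is_hole_def using dist sub adj len l2 nl by auto
  thus ?thesis unfolding ds_def n_def .
qed


lemma clean_vertex:
  assumes sh: "shortest_odd_hole V E cs"
    and nC5: "\<not> contains_induced V E C5_V C5_E"
    and nB: "\<not> contains_induced V E bull_V bull_E"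
    and nA: "\<forall>ac. \<not> contains_induced V E anchor_V (anchor_E ac)"
    and v: "v \<in> V" "v \<notin> set cs"
  shows "\<exists>i < length cs. {u \<in> set cs. E v u} \<subseteq>
       {cs ! i, cs ! (Suc i mod length cs), cs ! (Suc (Suc i) mod length cs)}"
proof -
  have oddK: "odd K" using sh unfolding shortest_odd_hole_def is_odd_hole_def K_def by simp
  have K7: "K \<ge> 7"
  proof -
    have "K \<noteq> 5" using C5_found nC5 by blast
    thus ?thesis using K4 oddK by presburger
  qed
  define s where "s x = E v (c x)" for x
  have sper: "\<And>x. s x = s (x mod K)" unfolding s_def using c_mod by simp
  have As: "\<And>i. \<not> (s i \<and> s (i+1) \<and> s (i+2) \<and> s (i+3))"
    unfolding s_def using anchor_found[OF K7 v] nA by blast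
  have Bs: "\<And>i. \<not> (\<not> s i \<and> s (i+1) \<and> s (i+2) \<and> \<not> s (i+3))"
    unfolding s_def using bull_found[OF K7 v] nB by blast
  have Cs: "False" if h: "s q" "s (q+l+1)" "\<forall>j. 1 \<le> j \<and> j \<le> l \<longrightarrow> \<not> s (q+j)"
     "even l" "2 \<le> l" "l \<le> K - 4" for q l
  proof -
    let ?ds = "v # map (\<lambda>j. c (q + int j)) [0..<nat l + 2]"
    have "is_hole V E ?ds" using hole_found[OF v, of q l] h unfolding s_def by blast
    moreover have "odd (length ?ds)" using h(4,5) by (simp add: even_nat_iff)
    ultimately have "is_odd_hole V E ?ds" unfolding is_odd_hole_def by simp
    hence "length cs \<le> length ?ds" using sh unfolding shortest_odd_hole_def by blast
    thus False using h(5,6) unfolding K_def by simp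
  qed
  have ex: "\<exists>i. \<forall>j. s j \<longrightarrow> j mod K \<in> {i mod K, (i+1) mod K, (i+2) mod K}"
  proof (cases "\<exists>x. s x")
    case False thus ?thesis by auto
  next
    case True
    then obtain x0 where x0: "s x0" by blast
    have "\<exists>y. \<not> s y" using As by blast
    then obtain y where y: "\<not> s y" by blast
    define P where "P d = s (y + int d)" for d
    have "P (nat ((x0 - y) mod K))"
    proof -
      have "s (y + int (nat ((x0 - y) mod K))) = s (y + (x0 - y) mod K)" using K7 by simp
      also have "\<dots> = s ((y + (x0 - y) mod K) mod K)" by (rule sper)
      also have "(y + (x0 - y) mod K) mod K = x0 mod K" by (simp add: mod_add_right_eq)
      also have "s (x0 mod K) = s x0" by (rule sper[symmetric])
      finally show ?thesis using x0 unfolding P_def by simp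
    qed
    hence Pd0: "P (LEAST d. P d)" by (rule LeastI)
    define d0 where "d0 = (LEAST d. P d)"
    have Pd0': "P d0" using Pd0 unfolding d0_def .
    have d0pos: "d0 > 0"
    proof (rule ccontr)
      assume "\<not> d0 > 0"
      hence "d0 = 0" by simp
      thus False using Pd0' y unfolding P_def by simp
    qed
    define p where "p = y + int d0"
    have sp: "s p" using Pd0 unfolding p_def d0_def P_def by simp
    have sp1: "\<not> s (p - 1)"
    proof -
      have "\<not> P (d0 - 1)" unfolding d0_def by (rule not_less_Least) (use d0pos d0_def in simp)
      moreover have "y + int (d0 - 1) = p - 1" using d0pos unfolding p_def by simp
      ultimately show ?thesis unfolding P_def by simp
    qed
    define t where "t x = s (p + x)" for x
    have tper: "\<And>x. t x = t (x mod K)"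
    proof -
      fix x
      have "t x = s ((p + x) mod K)" unfolding t_def by (rule sper)
      also have "(p + x) mod K = (p + x mod K) mod K" by (simp add: mod_add_right_eq)
      also have "s \<dots> = t (x mod K)" unfolding t_def by (rule sper[symmetric])
      finally show "t x = t (x mod K)" .
    qed
    have At: "\<not> (t i \<and> t (i+1) \<and> t (i+2) \<and> t (i+3))" for i
      unfolding t_def using As[of "p+i"] by (simp add: add.assoc)
    have Bt: "\<not> (\<not> t i \<and> t (i+1) \<and> t (i+2) \<and> \<not> t (i+3))" for i
      unfolding t_def using Bs[of "p+i"] by (simp add: add.assoc)
    have Ct: "False" if h: "t q" "t (q+l+1)" "\<forall>j. 1 \<le> j \<and> j \<le> l \<longrightarrow> \<not> t (q+j)"
     "even l" "2 \<le> l" "l \<le> K - 4" for q l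
      using Cs[of "p+q" l] h unfolding t_def by (simp add: add.assoc)
    have t0: "t 0" using sp unfolding t_def by simp
    have tm: "\<not> t (-1)" using sp1 unfolding t_def by simp
    obtain i where i: "\<forall>j. t j \<longrightarrow> j mod K \<in> {i mod K, (i+1) mod K, (i+2) mod K}"
    proof -
      have "\<exists>i. \<forall>j. t j \<longrightarrow> j mod K \<in> {i mod K, (i+1) mod K, (i+2) mod K}"
      proof (rule comb[of t K, OF tper oddK K7 At Bt _ t0 tm])
        fix q l assume "t q" "t (q + l + 1)" "\<forall>j. 1 \<le> j \<and> j \<le> l \<longrightarrow> \<not> t (q + j)"
          "even l" "2 \<le> l" "l \<le> K - 4"
        thus False by (rule Ct)
      qed
      thus ?thesis using that by blast
    qed
    have "\<forall>j. s j \<longrightarrow> j mod K \<in> {(p+i) mod K, (p+i+1) mod K, (p+i+2) mod K}"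
    proof (intro allI impI)
      fix j assume "s j"
      hence "t (j - p)" unfolding t_def by simp
      hence m: "(j - p) mod K \<in> {i mod K, (i+1) mod K, (i+2) mod K}" using i by blast
      have key: "j mod K = (p + b) mod K" if hb: "(j - p) mod K = b mod K" for b
      proof -
        have "((j - p) + p) mod K = (b + p) mod K" using hb by (rule mod_add_cong) simp
        thus ?thesis by (simp add: add.commute)
      qed
      from m show "j mod K \<in> {(p+i) mod K, (p+i+1) mod K, (p+i+2) mod K}"
        using key[of i] key[of "i+1"] key[of "i+2"] by (auto simp: add.assoc)
    qed
    thus ?thesis by blast
  qed
  then obtain ip where ip: "\<forall>j. s j \<longrightarrow> j mod K \<in> {ip mod K, (ip+1) mod K, (ip+2) mod K}" by blast
  define i0 where "i0 = nat (ip mod K)"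
  define i1 where "i1 = nat ((ip + 1) mod K)"
  have i0l: "i0 < length cs" unfolding i0_def by (rule idx)
  have e0: "c ip = cs ! i0" unfolding c_def i0_def ..
  have i1e: "i1 = Suc i0 mod length cs"
  proof -
    have "int (Suc i0 mod length cs) = (ip + 1) mod K" unfolding i0_def by (rule nat_mod_int)
    thus ?thesis unfolding i1_def by simp
  qed
  have e1: "c (ip + 1) = cs ! (Suc i0 mod length cs)" unfolding c_def i1e[symmetric] i1_def ..
  have e2: "c (ip + 2) = cs ! (Suc (Suc i0) mod length cs)"
  proof -
    have "int (Suc i1 mod length cs) = (ip + 1 + 1) mod K" unfolding i1_def by (rule nat_mod_int)
    hence "nat ((ip + 2) mod K) = Suc i1 mod length cs" by (simp add: add.commute)
    moreover have "Suc i1 mod length cs = Suc (Suc i0) mod length cs" unfolding i1e by (simp add: mod_Suc_eq)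
    ultimately show ?thesis unfolding c_def by simp
  qed
  have "{u \<in> set cs. E v u} \<subseteq> {c ip, c (ip + 1), c (ip + 2)}"
  proof
    fix u assume u: "u \<in> {u \<in> set cs. E v u}"
    then obtain m where m: "m < length cs" "u = cs ! m" by (auto simp: in_set_conv_nth)
    have cm: "c (int m) = u" unfolding c_def m(2) using m(1) unfolding K_def by (simp add: zmod_int)
    hence "s (int m)" using u unfolding s_def by simp
    hence "int m mod K \<in> {ip mod K, (ip+1) mod K, (ip+2) mod K}" using ip by blast
    hence "c (int m) \<in> {c ip, c (ip + 1), c (ip + 2)}" using c_eq by auto
    thus "u \<in> {c ip, c (ip + 1), c (ip + 2)}" using cm by simp
  qed
  thus ?thesis using i0l e0 e1 e2 by auto
qed

end

theorem theorem2p1: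
  fixes V :: "'a set" and E :: "'a \<Rightarrow> 'a \<Rightarrow> bool"
  assumes "graph V E"
    and "\<not> contains_induced V E C5_V C5_E"
    and "\<not> contains_induced V E bull_V bull_E"
    and "\<forall>ac. \<not> contains_induced V E anchor_V (anchor_E ac)"
  shows "pure V E \<and> (\<forall>cs. shortest_odd_hole V E cs \<longrightarrow> clean V E cs)"
proof -
  have cl: "clean V E cs" if sh: "shortest_odd_hole V E cs" for cs
  proof -
    interpret SOH V E cs
      using assms(1) sh unfolding shortest_odd_hole_def is_odd_hole_def by unfold_locales auto
    show ?thesis unfolding clean_def
      using clean_vertex[OF sh assms(2,3,4)] by blast
  qed
  have "pure V E"
  proof (cases "\<exists>cs. is_odd_hole V E cs")
    case False thus ?thesis unfolding pure_def by blast
  next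
    case True
    hence "\<exists>n. \<exists>cs. is_odd_hole V E cs \<and> length cs = n" by blast
    then obtain n where n: "\<exists>cs. is_odd_hole V E cs \<and> length cs = n"
        and nmin: "\<forall>m<n. \<not> (\<exists>cs. is_odd_hole V E cs \<and> length cs = m)"
      using exists_least_iff[of "\<lambda>n. \<exists>cs. is_odd_hole V E cs \<and> length cs = n"] by blast
    then obtain cs where cs: "is_odd_hole V E cs" "length cs = n" by blast
    have "shortest_odd_hole V E cs" unfolding shortest_odd_hole_def
      using cs nmin by (metis not_le)
    thus ?thesis unfolding pure_def using cl by blast
  qed
  thus ?thesis using cl by blast
qed

end
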